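(* Let $L$ and ${}^*L=e^{\sigma(x)}L+\beta$ be as in the context and $\tau=e^{\sigma}\,{}^*L/L$. Then $${}^*c^2=\tau^{-1}\Big[c^2+\frac{n+1}{{}^*L}A_\beta\Big].$$
   Context: $M$ is a smooth manifold of dimension $n$ with local coordinates $(x^i)$ and induced fiber coordinates $(y^i)$ on $TM$. $L(x,y)$ is a Finsler metric: positive and smooth for $y\neq0$, positively homogeneous of degree 1 in $y$, with positive definite fundamental tensor $g_{ij}=\frac12\frac{\partial^2L^2}{\partial y^i\partial y^j}$ and inverse $g^{ij}$. $\sigma(x)$ is a smooth function on $M$ and $\beta(x,y)=b_i(x)y^i$ is a 1-form; the conformal $\beta$-change is ${}^*L=e^{\sigma(x)}L+\beta$, assumed to be again a Finsler metric. Notation: $l_i=\partial L/\partial y^i$, $l^i=g^{ij}l_j$, $c_{ijk}=\frac12\partial g_{ij}/\partial y^k$, $c_i=g^{jk}c_{ijk}$, $c^i=g^{ij}c_j$, $c^2=c_ic^i$, $b^i=g^{ij}b_j$, $m_i=b_i-\frac{\beta}{L}l_i$, $m^i=g^{ij}m_j$, $m^2=m_im^i$, $c_\beta=c_ib^i$, $A_\beta=c_\beta+\frac{n+1}{4\,{}^*L}m^2$. Quantities built from ${}^*L$ by the same formulas (using ${}^*g_{ij}$ and its inverse ${}^*g^{ij}$) are denoted with a left asterisk; in particular ${}^*c^2={}^*c_i\,{}^*g^{ij}\,{}^*c_j$. *)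

theory Defs
  imports "HOL-Analysis.Analysis"
begin

text \<open>Local-chart model: the coordinate domain is an open set U of R^n
  (points x :: real^'n), fibre coordinates y :: real^'n, n = CARD('n).
  A Finsler metric is a function L x y.\<close>

definition dd :: "'a::real_normed_vector \<Rightarrow> ('a \<Rightarrow> real) \<Rightarrow> 'a \<Rightarrow> real" where
  "dd v f z = deriv (\<lambda>t. f (z + t *\<^sub>R v)) 0"

fun Ck :: "nat \<Rightarrow> 'a::euclidean_space set \<Rightarrow> ('a \<Rightarrow> real) \<Rightarrow> bool" where
  "Ck 0 S f = continuous_on S f"
| "Ck (Suc k) S f = (f differentiable_on S \<and> (\<forall>b\<in>Basis. Ck k S (dd b f)))"

definition smooth_on :: "'a::euclidean_space set \<Rightarrow> ('a \<Rightarrow> real) \<Rightarrow> bool" where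
  "smooth_on S f = (\<forall>k. Ck k S f)"

definition pdy :: "'n::finite \<Rightarrow> (real^'n \<Rightarrow> real) \<Rightarrow> real^'n \<Rightarrow> real" where
  "pdy i f y = dd (axis i 1) f y"

definition gt :: "(real^'n \<Rightarrow> real^'n \<Rightarrow> real) \<Rightarrow> real^'n \<Rightarrow> real^'n \<Rightarrow> 'n::finite \<Rightarrow> 'n \<Rightarrow> real" where
  "gt L x y i j = (1/2) * pdy i (pdy j (\<lambda>v. (L x v)^2)) y"

definition gmat :: "(real^'n \<Rightarrow> real^'n \<Rightarrow> real) \<Rightarrow> real^'n \<Rightarrow> real^'n \<Rightarrow> real^'n^'n::finite" where
  "gmat L x y = (\<chi> i j. gt L x y i j)"

definition ginv :: "(real^'n \<Rightarrow> real^'n \<Rightarrow> real) \<Rightarrow> real^'n \<Rightarrow> real^'n \<Rightarrow> 'n::finite \<Rightarrow> 'n \<Rightarrow> real" where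
  "ginv L x y i j = matrix_inv (gmat L x y) $ i $ j"

definition ct :: "(real^'n \<Rightarrow> real^'n \<Rightarrow> real) \<Rightarrow> real^'n \<Rightarrow> real^'n \<Rightarrow> 'n::finite \<Rightarrow> 'n \<Rightarrow> 'n \<Rightarrow> real" where
  "ct L x y i j k = (1/2) * pdy k (\<lambda>v. gt L x v i j) y"

definition cvec :: "(real^'n \<Rightarrow> real^'n \<Rightarrow> real) \<Rightarrow> real^'n \<Rightarrow> real^'n \<Rightarrow> 'n::finite \<Rightarrow> real" where
  "cvec L x y i = (\<Sum>j\<in>UNIV. \<Sum>k\<in>UNIV. ginv L x y j k * ct L x y i j k)"

definition csq :: "(real^'n \<Rightarrow> real^'n \<Rightarrow> real) \<Rightarrow> real^'n \<Rightarrow> real^'n::finite \<Rightarrow> real" where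
  "csq L x y = (\<Sum>i\<in>UNIV. \<Sum>j\<in>UNIV. cvec L x y i * ginv L x y i j * cvec L x y j)"

definition finsler :: "(real^'n::finite) set \<Rightarrow> (real^'n \<Rightarrow> real^'n \<Rightarrow> real) \<Rightarrow> bool" where
  "finsler U L \<longleftrightarrow>
     smooth_on (U \<times> (UNIV - {0})) (\<lambda>(x, y). L x y) \<and>
     (\<forall>x\<in>U. \<forall>y. y \<noteq> 0 \<longrightarrow> L x y > 0) \<and>
     (\<forall>x\<in>U. \<forall>y. \<forall>t>0. L x (t *\<^sub>R y) = t * L x y) \<and>
     (\<forall>x\<in>U. \<forall>y. y \<noteq> 0 \<longrightarrow>
        (\<forall>v. v \<noteq> 0 \<longrightarrow> (\<Sum>i\<in>UNIV. \<Sum>j\<in>UNIV. gt L x y i j * v$i * v$j) > 0))"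

definition betaf :: "(real^'n \<Rightarrow> real^'n) \<Rightarrow> real^'n \<Rightarrow> real^'n::finite \<Rightarrow> real" where
  "betaf b x y = (\<Sum>i\<in>UNIV. b x $ i * y $ i)"

definition conf_beta :: "(real^'n \<Rightarrow> real) \<Rightarrow> (real^'n \<Rightarrow> real^'n) \<Rightarrow> (real^'n \<Rightarrow> real^'n \<Rightarrow> real)
   \<Rightarrow> real^'n \<Rightarrow> real^'n::finite \<Rightarrow> real" where
  "conf_beta \<sigma> b L x y = exp (\<sigma> x) * L x y + betaf b x y"

definition mvec :: "(real^'n \<Rightarrow> real^'n) \<Rightarrow> (real^'n \<Rightarrow> real^'n \<Rightarrow> real) \<Rightarrow> real^'n \<Rightarrow> real^'n \<Rightarrow> 'n::finite \<Rightarrow> real" where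
  "mvec b L x y i = b x $ i - betaf b x y / L x y * pdy i (L x) y"

definition msq :: "(real^'n \<Rightarrow> real^'n) \<Rightarrow> (real^'n \<Rightarrow> real^'n \<Rightarrow> real) \<Rightarrow> real^'n \<Rightarrow> real^'n::finite \<Rightarrow> real" where
  "msq b L x y = (\<Sum>i\<in>UNIV. \<Sum>j\<in>UNIV. ginv L x y i j * mvec b L x y i * mvec b L x y j)"

definition cbeta :: "(real^'n \<Rightarrow> real^'n) \<Rightarrow> (real^'n \<Rightarrow> real^'n \<Rightarrow> real) \<Rightarrow> real^'n \<Rightarrow> real^'n::finite \<Rightarrow> real" where
  "cbeta b L x y = (\<Sum>i\<in>UNIV. \<Sum>j\<in>UNIV. cvec L x y i * ginv L x y i j * b x $ j)"

definition Abeta :: "(real^'n \<Rightarrow> real) \<Rightarrow> (real^'n \<Rightarrow> real^'n) \<Rightarrow> (real^'n \<Rightarrow> real^'n \<Rightarrow> real)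
   \<Rightarrow> real^'n \<Rightarrow> real^'n::finite \<Rightarrow> real" where
  "Abeta \<sigma> b L x y = cbeta b L x y
     + (real CARD('n) + 1) / (4 * conf_beta \<sigma> b L x y) * msq b L x y"

end

theory Submission
  imports Defs
begin

lemma dd_hasderiv:
  fixes f :: "'a::real_normed_vector \<Rightarrow> real"
  assumes "(f has_derivative D) (at v)"
  shows "dd w f v = D w"
proof -
  have l: "linear D" using assms has_derivative_linear by blast
  have "((\<lambda>t. v + t *\<^sub>R w) has_derivative (\<lambda>t. t *\<^sub>R w)) (at 0)"
    by (auto intro!: derivative_eq_intros)
  then have "((\<lambda>t. f (v + t *\<^sub>R w)) has_derivative (\<lambda>t. D (t *\<^sub>R w))) (at 0)"
    using has_derivative_compose[of "\<lambda>t. v + t *\<^sub>R w" _ 0 UNIV f D] assms by simp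
  then have "((\<lambda>t. f (v + t *\<^sub>R w)) has_real_derivative D w) (at 0)"
    by (rule has_derivative_imp_has_field_derivative) (simp add: linear_scale[OF l])
  then show ?thesis unfolding dd_def by (rule DERIV_imp_deriv)
qed

lemma dd_transform:
  fixes f :: "'a::real_normed_vector \<Rightarrow> real"
  assumes "open S" "v \<in> S" "\<And>u. u \<in> S \<Longrightarrow> g u = f u" "(g has_derivative D) (at v)"
  shows "dd w f v = D w"
proof -
  have "(f has_derivative D) (at v)"
    using has_derivative_transform_within_open[of g D v UNIV S f] assms by auto
  then show ?thesis by (rule dd_hasderiv)
qed

lemma lin_expand:
  fixes D :: "real^'n \<Rightarrow> real"
  assumes "linear D"
  shows "D w = (\<Sum>i\<in>UNIV. w$i * D (axis i 1))"
proof -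
  have "D w = D (\<Sum>i\<in>UNIV. w$i *\<^sub>R axis i 1)"
    using basis_expansion[of w] by (simp add: scalar_mult_eq_scaleR)
  also have "\<dots> = (\<Sum>i\<in>UNIV. w$i * D (axis i 1))"
    by (simp add: linear_sum[OF assms] linear_scale[OF assms])
  finally show ?thesis .
qed

lemma pdy_frechet:
  fixes f :: "real^'n \<Rightarrow> real"
  assumes "f differentiable at v"
  shows "(f has_derivative (\<lambda>w. \<Sum>i\<in>UNIV. w$i * pdy i f v)) (at v)"
proof -
  let ?D = "frechet_derivative f (at v)"
  have d: "(f has_derivative ?D) (at v)" using assms frechet_derivative_works by blast
  have l: "linear ?D" using d has_derivative_linear by blast
  have "\<And>i. pdy i f v = ?D (axis i 1)" unfolding pdy_def using d by (rule dd_hasderiv)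
  moreover have "?D = (\<lambda>w. \<Sum>i\<in>UNIV. w$i * ?D (axis i 1))"
    using lin_expand[OF l] by blast
  ultimately show ?thesis using d by simp
qed

lemma line_deriv:
  fixes f :: "real^'n \<Rightarrow> real"
  assumes "f differentiable at (z + s *\<^sub>R a)"
  shows "((\<lambda>s. f (z + s *\<^sub>R a)) has_real_derivative dd a f (z + s *\<^sub>R a)) (at s)"
proof -
  let ?u = "z + s *\<^sub>R a"
  let ?D = "frechet_derivative f (at ?u)"
  have d: "(f has_derivative ?D) (at ?u)" using assms frechet_derivative_works by blast
  have l: "linear ?D" using d has_derivative_linear by blast
  have e: "dd a f ?u = ?D a" using d by (rule dd_hasderiv)
  have "((\<lambda>s. z + s *\<^sub>R a) has_derivative (\<lambda>t. t *\<^sub>R a)) (at s)"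
    by (auto intro!: derivative_eq_intros)
  then have "((\<lambda>s. f (z + s *\<^sub>R a)) has_derivative (\<lambda>t. ?D (t *\<^sub>R a))) (at s)"
    using has_derivative_compose[of "\<lambda>s. z + s *\<^sub>R a" _ s UNIV f ?D] d by simp
  then show ?thesis unfolding e
    by (rule has_derivative_imp_has_field_derivative) (simp add: linear_scale[OF l])
qed

lemma schwarz_aux:
  fixes f :: "real^'n \<Rightarrow> real"
  assumes r: "ball v r \<subseteq> S" and h: "0 < h" "2*h < r"
    and d1: "\<And>u. u \<in> S \<Longrightarrow> f differentiable at u"
    and d2: "\<And>u k. u \<in> S \<Longrightarrow> pdy k f differentiable at u"
  shows "\<exists>u. dist u v < 2*h \<and>
    f (v + h *\<^sub>R axis p 1 + h *\<^sub>R axis q 1) - f (v + h *\<^sub>R axis p 1) - f (v + h *\<^sub>R axis q 1) + f v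
      = h * h * pdy q (pdy p f) u"
proof -
  let ?a = "axis p 1 :: real^'n" and ?b = "axis q 1 :: real^'n"
  have inS: "v + s *\<^sub>R ?a + t *\<^sub>R ?b \<in> S" if "0 \<le> s" "s \<le> h" "0 \<le> t" "t \<le> h" for s t
  proof -
    have "norm (s *\<^sub>R ?a + t *\<^sub>R ?b) \<le> norm (s *\<^sub>R ?a) + norm (t *\<^sub>R ?b)" by (rule norm_triangle_ineq)
    also have "\<dots> = s + t" using that by simp
    finally have "dist (v + s *\<^sub>R ?a + t *\<^sub>R ?b) v < r" using that h by (simp add: dist_norm)
    then show ?thesis using r by (auto simp: dist_commute)
  qed
  define \<psi> where "\<psi> s = f ((v + h *\<^sub>R ?b) + s *\<^sub>R ?a) - f (v + s *\<^sub>R ?a)" for s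
  have dpsi: "(\<psi> has_real_derivative (pdy p f ((v + h *\<^sub>R ?b) + s *\<^sub>R ?a) - pdy p f (v + s *\<^sub>R ?a))) (at s)"
    if "0 \<le> s" "s \<le> h" for s
  proof -
    have m1: "(v + h *\<^sub>R ?b) + s *\<^sub>R ?a \<in> S" using inS[of s h] that h by (simp add: algebra_simps)
    have m2: "v + s *\<^sub>R ?a \<in> S" using inS[of s 0] that h by simp
    show ?thesis unfolding \<psi>_def pdy_def
      by (intro DERIV_diff line_deriv d1 m1 m2)
  qed
  then obtain s1 where s1: "0 < s1" "s1 < h"
    "\<psi> h - \<psi> 0 = (h - 0) * (pdy p f ((v + h *\<^sub>R ?b) + s1 *\<^sub>R ?a) - pdy p f (v + s1 *\<^sub>R ?a))"
    using MVT2[OF h(1) dpsi] by auto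
  define \<phi> where "\<phi> t = pdy p f ((v + s1 *\<^sub>R ?a) + t *\<^sub>R ?b)" for t
  have dchi: "(\<phi> has_real_derivative (pdy q (pdy p f) ((v + s1 *\<^sub>R ?a) + t *\<^sub>R ?b))) (at t)"
    if "0 \<le> t" "t \<le> h" for t
  proof -
    have m1: "(v + s1 *\<^sub>R ?a) + t *\<^sub>R ?b \<in> S" using inS[of s1 t] that s1 by simp
    show ?thesis unfolding \<phi>_def pdy_def[of q]
      using line_deriv[of "pdy p f" "v + s1 *\<^sub>R ?a" t ?b] d2[OF m1, of p] by simp
  qed
  then obtain t1 where t1: "0 < t1" "t1 < h"
    "\<phi> h - \<phi> 0 = (h - 0) * pdy q (pdy p f) ((v + s1 *\<^sub>R ?a) + t1 *\<^sub>R ?b)"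
    using MVT2[OF h(1) dchi] by auto
  let ?u = "(v + s1 *\<^sub>R ?a) + t1 *\<^sub>R ?b"
  have "dist ?u v \<le> norm (s1 *\<^sub>R ?a) + norm (t1 *\<^sub>R ?b)"
    using norm_triangle_ineq[of "s1 *\<^sub>R ?a" "t1 *\<^sub>R ?b"] by (simp add: dist_norm)
  also have "\<dots> < 2*h" using s1 t1 by simp
  finally have du: "dist ?u v < 2*h" .
  have "\<psi> h - \<psi> 0 = h * (\<phi> h - \<phi> 0)" using s1(3) unfolding \<phi>_def by (simp add: algebra_simps)
  also have "\<dots> = h * h * pdy q (pdy p f) ?u" using t1(3) by simp
  finally have "\<psi> h - \<psi> 0 = h * h * pdy q (pdy p f) ?u" .
  moreover have "\<psi> h - \<psi> 0 = f (v + h *\<^sub>R ?a + h *\<^sub>R ?b) - f (v + h *\<^sub>R ?a) - f (v + h *\<^sub>R ?b) + f v"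
    unfolding \<psi>_def by (simp add: algebra_simps)
  ultimately show ?thesis using du by metis
qed

lemma schwarz:
  fixes f :: "real^'n \<Rightarrow> real"
  assumes S: "open S" "v \<in> S"
    and d1: "\<And>u. u \<in> S \<Longrightarrow> f differentiable at u"
    and d2: "\<And>u k. u \<in> S \<Longrightarrow> pdy k f differentiable at u"
    and c3: "\<And>u k m. u \<in> S \<Longrightarrow> continuous (at u) (pdy k (pdy m f))"
  shows "pdy i (pdy j f) v = pdy j (pdy i f) v"
proof (rule ccontr)
  let ?A = "pdy j (pdy i f) v" and ?B = "pdy i (pdy j f) v"
  assume ne: "?B \<noteq> ?A"
  define d where "d = \<bar>?A - ?B\<bar>"
  have d: "d > 0" using ne unfolding d_def by simp
  obtain r where r: "r > 0" "ball v r \<subseteq> S" using S open_contains_ball by blast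
  obtain e1 where e1: "e1 > 0" "\<And>u. dist u v < e1 \<Longrightarrow> dist (pdy j (pdy i f) u) ?A < d/2"
    using c3[OF S(2), of j i] d unfolding continuous_at_eps_delta by (metis half_gt_zero)
  obtain e2 where e2: "e2 > 0" "\<And>u. dist u v < e2 \<Longrightarrow> dist (pdy i (pdy j f) u) ?B < d/2"
    using c3[OF S(2), of i j] d unfolding continuous_at_eps_delta by (metis half_gt_zero)
  define h where "h = min r (min e1 e2) / 4"
  have h: "0 < h" "2*h < r" "2*h < e1" "2*h < e2" using r e1 e2 unfolding h_def by auto
  obtain u1 where u1: "dist u1 v < 2*h"
    "f (v + h *\<^sub>R axis i 1 + h *\<^sub>R axis j 1) - f (v + h *\<^sub>R axis i 1) - f (v + h *\<^sub>R axis j 1) + f v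
      = h * h * pdy j (pdy i f) u1"
    using schwarz_aux[OF r(2) h(1,2) d1 d2, of i j] by blast
  obtain u2 where u2: "dist u2 v < 2*h"
    "f (v + h *\<^sub>R axis j 1 + h *\<^sub>R axis i 1) - f (v + h *\<^sub>R axis j 1) - f (v + h *\<^sub>R axis i 1) + f v
      = h * h * pdy i (pdy j f) u2"
    using schwarz_aux[OF r(2) h(1,2) d1 d2, of j i] by blast
  have "v + h *\<^sub>R axis j 1 + h *\<^sub>R axis i 1 = v + h *\<^sub>R axis i 1 + h *\<^sub>R axis j 1"
    by (simp add: algebra_simps)
  then have "h * h * pdy j (pdy i f) u1 = h * h * pdy i (pdy j f) u2" using u1(2) u2(2) by (simp only:)
  then have eq: "pdy j (pdy i f) u1 = pdy i (pdy j f) u2" using h by simp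
  have "dist (pdy j (pdy i f) u1) ?A < d/2" using e1(2) u1(1) h by simp
  moreover have "dist (pdy i (pdy j f) u2) ?B < d/2" using e2(2) u2(1) h by simp
  ultimately have "\<bar>?A - ?B\<bar> < d" using eq unfolding dist_real_def by linarith
  then show False unfolding d_def by simp
qed

lemma dd_snd:
  fixes g :: "('a::real_normed_vector \<times> 'b::real_normed_vector) \<Rightarrow> real"
  shows "dd (0, w) g (x, v) = dd w (\<lambda>v. g (x, v)) v"
  unfolding dd_def by simp

lemma diff_snd:
  fixes g :: "('a::real_normed_vector \<times> 'b::real_normed_vector) \<Rightarrow> real"
  assumes "g differentiable at (x, v)"
  shows "(\<lambda>w. g (x, w)) differentiable at v"
proof -
  have "(\<lambda>w. (x, w)) differentiable at v" by (simp add: differentiable_Pair)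
  then have "(g \<circ> (\<lambda>w. (x, w))) differentiable at v"
    using assms by (intro differentiable_chain_at) auto
  then show ?thesis by (simp add: o_def)
qed

lemma Ck_diff_at: "Ck (Suc k) S f \<Longrightarrow> open S \<Longrightarrow> p \<in> S \<Longrightarrow> f differentiable at p"
proof -
  assume "Ck (Suc k) S f" "open S" "p \<in> S"
  then have "f differentiable_on S" by simp
  then have "f differentiable at p within S" using \<open>p \<in> S\<close> unfolding differentiable_on_def by blast
  then show ?thesis using at_within_open[OF \<open>p \<in> S\<close> \<open>open S\<close>] by simp
qed

lemma Ck_dd: "Ck (Suc k) S f \<Longrightarrow> b \<in> Basis \<Longrightarrow> Ck k S (dd b f)" by simp

lemma axis_Basis_prod: "((0::real^'n), axis j (1::real)) \<in> (Basis :: ((real^'n) \<times> (real^'n)) set)"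
  by (simp add: Basis_prod_def)

lemma finsler_diff:
  fixes L :: "real^'n \<Rightarrow> real^'n \<Rightarrow> real"
  assumes U: "open U" and F: "finsler U L" and x: "x \<in> U" and v: "v \<noteq> 0"
  shows "L x differentiable at v"
    "\<And>j. pdy j (L x) differentiable at v"
    "\<And>i j. pdy i (pdy j (L x)) differentiable at v"
    "\<And>k i j. pdy k (pdy i (pdy j (L x))) differentiable at v"
proof -
  let ?S = "U \<times> (UNIV - {0::real^'n})"
  let ?P = "\<lambda>(x, y). L x y"
  have S: "open ?S" using U by (intro open_Times) auto
  have p: "(x, v) \<in> ?S" using x v by simp
  have sm: "\<And>k. Ck k ?S ?P" using F unfolding finsler_def smooth_on_def by blast
  define b where "b j = ((0::real^'n), (axis j (1::real) :: real^'n))" for j :: 'n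
  have bB: "\<And>j. b j \<in> Basis" unfolding b_def by (simp add: Basis_prod_def)
  have e1: "\<And>j x. (\<lambda>v. dd (b j) ?P (x, v)) = pdy j (L x)"
    unfolding b_def pdy_def by (simp add: dd_snd)
  have bsnd: "\<And>i g x v. dd (b i) g (x, v) = pdy i (\<lambda>w. g (x, w)) v"
    unfolding b_def pdy_def by (rule dd_snd)
  have e2: "(\<lambda>v. dd (b i) (dd (b j) ?P) (x, v)) = pdy i (pdy j (L x))" for i j x
    by (simp only: bsnd e1) simp
  have e3: "(\<lambda>v. dd (b k) (dd (b i) (dd (b j) ?P)) (x, v)) = pdy k (pdy i (pdy j (L x)))" for k i j x
    by (simp only: bsnd e2) simp
  have "?P differentiable at (x, v)" using Ck_diff_at[OF sm[of "Suc 0"] S p] .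
  from diff_snd[OF this] show "L x differentiable at v" by simp
  fix i j k
  have "dd (b j) ?P differentiable at (x, v)"
    using Ck_diff_at[OF Ck_dd[OF sm[of "Suc (Suc 0)"] bB] S p] .
  from diff_snd[OF this] show "pdy j (L x) differentiable at v" using e1 by metis
  have "dd (b i) (dd (b j) ?P) differentiable at (x, v)"
    using Ck_diff_at[OF Ck_dd[OF Ck_dd[OF sm[of "Suc (Suc (Suc 0))"] bB] bB] S p] .
  from diff_snd[OF this] show "pdy i (pdy j (L x)) differentiable at v" using e2 by metis
  have "dd (b k) (dd (b i) (dd (b j) ?P)) differentiable at (x, v)"
    using Ck_diff_at[OF Ck_dd[OF Ck_dd[OF Ck_dd[OF sm[of "Suc (Suc (Suc (Suc 0)))"] bB] bB] bB] S p] .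
  from diff_snd[OF this] show "pdy k (pdy i (pdy j (L x))) differentiable at v" using e3 by metis
qed

lemma sum_axis: "(\<Sum>i\<in>UNIV. (axis j 1 :: real^'n) $ i * c i) = (c j :: real)"
proof -
  have "\<And>i. (axis j 1 :: real^'n) $ i * c i = (if i = j then c j else 0)" by (simp add: axis_def)
  then show ?thesis by simp
qed

lemma has_derivative_nth: "((\<lambda>x::real^'n. x $ i) has_derivative (\<lambda>w. w $ i)) F"
  using bounded_linear_vec_nth by (rule bounded_linear.has_derivative) (rule has_derivative_ident)

lemma pdy_deriv:
  fixes f :: "real^'n \<Rightarrow> real"
  assumes "(f has_derivative D) (at v)"
  shows "pdy j f v = D (axis j 1)"
  unfolding pdy_def using assms by (rule dd_hasderiv)

lemma pdy_transform:
  fixes f g :: "real^'n \<Rightarrow> real"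
  assumes "open S" "v \<in> S" "\<And>u. u \<in> S \<Longrightarrow> g u = f u" "g differentiable at v"
  shows "pdy k f v = pdy k g v"
proof -
  have d: "(g has_derivative frechet_derivative g (at v)) (at v)"
    using assms(4) frechet_derivative_works by blast
  show ?thesis unfolding pdy_def using dd_transform[OF assms(1-3) d] dd_hasderiv[OF d] by simp
qed

lemma pdy_sq:
  fixes f :: "real^'n \<Rightarrow> real"
  assumes "f differentiable at v"
  shows "pdy k (\<lambda>w. (f w)^2) v = 2 * f v * pdy k f v"
proof -
  have "((\<lambda>w. (f w)^2) has_derivative (\<lambda>h. 2 * f v * (\<Sum>i\<in>UNIV. h$i * pdy i f v))) (at v)"
    using pdy_frechet[OF assms] by (auto intro!: derivative_eq_intros simp: power2_eq_square)
  from pdy_deriv[OF this, of k] show ?thesis by (simp add: sum_axis)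
qed

lemma pdy_mult:
  fixes f g :: "real^'n \<Rightarrow> real"
  assumes "f differentiable at v" "g differentiable at v"
  shows "pdy k (\<lambda>w. f w * g w) v = pdy k f v * g v + f v * pdy k g v"
proof -
  have "((\<lambda>w. f w * g w) has_derivative (\<lambda>h. f v * (\<Sum>i\<in>UNIV. h$i * pdy i g v) + (\<Sum>i\<in>UNIV. h$i * pdy i f v) * g v)) (at v)"
    using pdy_frechet[OF assms(1)] pdy_frechet[OF assms(2)] by (auto intro!: derivative_eq_intros)
  from pdy_deriv[OF this, of k] show ?thesis by (simp add: sum_axis)
qed

lemma pdy_cmult:
  fixes f :: "real^'n \<Rightarrow> real"
  assumes "f differentiable at v"
  shows "pdy k (\<lambda>w. c * f w) v = c * pdy k f v"
proof -
  have "((\<lambda>w. c * f w) has_derivative (\<lambda>h. c * (\<Sum>i\<in>UNIV. h$i * pdy i f v))) (at v)"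
    using pdy_frechet[OF assms] by (auto intro!: derivative_eq_intros)
  from pdy_deriv[OF this, of k] show ?thesis by (simp add: sum_axis)
qed

lemma pdy_add:
  fixes f g :: "real^'n \<Rightarrow> real"
  assumes "f differentiable at v" "g differentiable at v"
  shows "pdy k (\<lambda>w. f w + g w) v = pdy k f v + pdy k g v"
proof -
  have "((\<lambda>w. f w + g w) has_derivative (\<lambda>h. (\<Sum>i\<in>UNIV. h$i * pdy i f v) + (\<Sum>i\<in>UNIV. h$i * pdy i g v))) (at v)"
    using pdy_frechet[OF assms(1)] pdy_frechet[OF assms(2)] by (auto intro!: derivative_eq_intros)
  from pdy_deriv[OF this, of k] show ?thesis by (simp add: sum_axis)
qed

lemma pdy_linear: "pdy k (\<lambda>w. \<Sum>i\<in>UNIV. c $ i * w $ i) v = c $ k"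
proof -
  have "((\<lambda>w. \<Sum>i\<in>UNIV. c $ i * w $ i) has_derivative (\<lambda>h. \<Sum>i\<in>UNIV. c $ i * h $ i)) (at v)"
    by (auto intro!: derivative_eq_intros has_derivative_nth)
  from pdy_deriv[OF this, of k] show ?thesis using sum_axis[of k "\<lambda>i. c $ i"] by (simp only: mult.commute)
qed

lemma diff_linear: "(\<lambda>w. \<Sum>i\<in>UNIV. c $ i * (w::real^'n) $ i) differentiable at v"
proof -
  have "((\<lambda>w. \<Sum>i\<in>UNIV. c $ i * w $ i) has_derivative (\<lambda>h. \<Sum>i\<in>UNIV. c $ i * (h::real^'n) $ i)) (at v)"
    by (auto intro!: derivative_eq_intros has_derivative_nth)
  then show ?thesis unfolding differentiable_def by blast
qed

lemma pdy_const: "pdy k (\<lambda>w. c) v = 0"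
  by (subst pdy_deriv[of _ "\<lambda>h. 0"]) auto

definition smooth3 :: "(real^'n::finite \<Rightarrow> real) \<Rightarrow> bool" where
  "smooth3 F \<longleftrightarrow> (\<forall>v. v \<noteq> 0 \<longrightarrow> F differentiable at v \<and> (\<forall>j. pdy j F differentiable at v)
     \<and> (\<forall>i j. pdy i (pdy j F) differentiable at v) \<and> (\<forall>k i j. pdy k (pdy i (pdy j F)) differentiable at v))"

lemma pdy_sum:
  fixes f :: "'a \<Rightarrow> real^'n \<Rightarrow> real"
  assumes "finite A" "\<And>j. j \<in> A \<Longrightarrow> f j differentiable at v"
  shows "pdy k (\<lambda>w. \<Sum>j\<in>A. f j w) v = (\<Sum>j\<in>A. pdy k (f j) v)"
proof -
  have "((\<lambda>w. \<Sum>j\<in>A. f j w) has_derivative (\<lambda>h. \<Sum>j\<in>A. (\<Sum>i\<in>UNIV. h$i * pdy i (f j) v))) (at v)"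
    using pdy_frechet assms by (auto intro!: has_derivative_sum)
  from pdy_deriv[OF this, of k] show ?thesis by (simp add: sum_axis)
qed

lemma diff_sum:
  fixes f :: "'a \<Rightarrow> real^'n \<Rightarrow> real"
  assumes "finite A" "\<And>j. j \<in> A \<Longrightarrow> f j differentiable at v"
  shows "(\<lambda>w. \<Sum>j\<in>A. f j w) differentiable at v"
  using assms by (induction A rule: finite_induct) auto

lemma pdy_nth: "pdy k (\<lambda>w::real^'n. w $ j) v = (if k = j then 1 else 0)"
  using pdy_deriv[OF has_derivative_nth[of j "at v"], of k] by (simp add: axis_def)

lemma diff_nth: "(\<lambda>w::real^'n. w $ j) differentiable at v"
  using has_derivative_nth unfolding differentiable_def by blast

lemma openV: "open (UNIV - {0::real^'n})" by auto

context
  fixes F :: "real^'n::finite \<Rightarrow> real" and y :: "real^'n"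
  assumes sm: "smooth3 F" and y: "y \<noteq> 0"
begin

lemma d0: "F differentiable at y" using sm y unfolding smooth3_def by blast
lemma d1: "pdy j F differentiable at y" using sm y unfolding smooth3_def by blast
lemma d2: "pdy i (pdy j F) differentiable at y" using sm y unfolding smooth3_def by blast
lemma d3: "pdy k (pdy i (pdy j F)) differentiable at y" using sm y unfolding smooth3_def by blast

lemma g_formula:
  "(1/2) * pdy i (pdy j (\<lambda>w. (F w)^2)) y = pdy i F y * pdy j F y + F y * pdy i (pdy j F) y"
proof -
  have eq: "2 * (F u * pdy j F u) = pdy j (\<lambda>w. (F w)^2) u" if "u \<in> UNIV - {0}" for u
    using pdy_sq[of F u j] sm that unfolding smooth3_def by auto
  have dg: "(\<lambda>u. 2 * (F u * pdy j F u)) differentiable at y"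
    using d0 d1 by auto
  have "pdy i (pdy j (\<lambda>w. (F w)^2)) y = pdy i (\<lambda>u. 2 * (F u * pdy j F u)) y"
    using pdy_transform[OF openV _ eq dg] y by simp
  also have "\<dots> = 2 * (pdy i F y * pdy j F y + F y * pdy i (pdy j F) y)"
    using d0 d1 by (simp add: pdy_cmult pdy_mult)
  finally show ?thesis by simp
qed

end

lemma g_formula_all:
  assumes "smooth3 F" "u \<noteq> 0"
  shows "(1/2) * pdy i (pdy j (\<lambda>w. (F w)^2)) u = pdy i F u * pdy j F u + F u * pdy i (pdy j F) u"
  using g_formula[OF assms] .

context
  fixes F :: "real^'n::finite \<Rightarrow> real" and y :: "real^'n"
  assumes sm: "smooth3 F" and y: "y \<noteq> 0"
begin

lemma c_formula:
  "pdy k (\<lambda>v. (1/2) * pdy i (pdy j (\<lambda>w. (F w)^2)) v) y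
    = pdy k (pdy i F) y * pdy j F y + pdy i F y * pdy k (pdy j F) y
      + pdy k F y * pdy i (pdy j F) y + F y * pdy k (pdy i (pdy j F)) y"
proof -
  have eq: "pdy i F u * pdy j F u + F u * pdy i (pdy j F) u = (1/2) * pdy i (pdy j (\<lambda>w. (F w)^2)) u"
    if "u \<in> UNIV - {0}" for u
    using g_formula_all[OF sm, of u] that by simp
  have dg: "(\<lambda>u. pdy i F u * pdy j F u + F u * pdy i (pdy j F) u) differentiable at y"
    using d0[OF sm y] d1[OF sm y] d2[OF sm y] by auto
  have "pdy k (\<lambda>v. (1/2) * pdy i (pdy j (\<lambda>w. (F w)^2)) v) y
      = pdy k (\<lambda>u. pdy i F u * pdy j F u + F u * pdy i (pdy j F) u) y"
    using pdy_transform[OF openV _ eq dg] y by simp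
  also have "\<dots> = pdy k (pdy i F) y * pdy j F y + pdy i F y * pdy k (pdy j F) y
      + (pdy k F y * pdy i (pdy j F) y + F y * pdy k (pdy i (pdy j F)) y)"
    using d0[OF sm y] d1[OF sm y] d2[OF sm y]
    by (simp add: pdy_add pdy_mult differentiable_mult)
  finally show ?thesis by simp
qed

end

lemma sum_delta_mult: "(\<Sum>j\<in>UNIV. (if (i::'n::finite) = j then 1 else 0) * (c j::real)) = c i"
proof -
  have "\<And>j. (if i = j then 1 else 0) * c j = (if i = j then c j else 0)" by simp
  then show ?thesis by simp
qed

context
  fixes F :: "real^'n::finite \<Rightarrow> real"
  assumes sm: "smooth3 F" and hom: "\<And>v t. t > 0 \<Longrightarrow> F (t *\<^sub>R v) = t * F v"
begin

lemma euler1: "v \<noteq> 0 \<Longrightarrow> (\<Sum>i\<in>UNIV. v$i * pdy i F v) = F v"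
proof -
  assume v: "v \<noteq> 0"
  have dF: "F differentiable at v" using d0[OF sm v] .
  have "((\<lambda>s. F (v + s *\<^sub>R v)) has_real_derivative dd v F (v + 0 *\<^sub>R v)) (at 0)"
    by (rule line_deriv) (simp add: dF)
  moreover have "dd v F v = (\<Sum>i\<in>UNIV. v$i * pdy i F v)"
    using dd_hasderiv[OF pdy_frechet[OF dF]] by simp
  ultimately have a: "((\<lambda>s. F (v + s *\<^sub>R v)) has_real_derivative (\<Sum>i\<in>UNIV. v$i * pdy i F v)) (at 0)"
    by simp
  have ev: "eventually (\<lambda>s. F (v + s *\<^sub>R v) = (1 + s) * F v) (nhds (0::real))"
  proof -
    have "eventually (\<lambda>s. s \<in> {(-1::real)<..}) (nhds 0)" by (rule eventually_nhds_in_open) auto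
    then show ?thesis
    proof (rule eventually_mono)
      fix s :: real assume "s \<in> {-1<..}"
      then have "F ((1 + s) *\<^sub>R v) = (1 + s) * F v" by (intro hom) simp
      then show "F (v + s *\<^sub>R v) = (1 + s) * F v" by (simp add: algebra_simps)
    qed
  qed
  have "((\<lambda>s. (1 + s) * F v) has_real_derivative F v) (at 0)"
    by (auto intro!: derivative_eq_intros)
  then have b: "((\<lambda>s. F (v + s *\<^sub>R v)) has_real_derivative F v) (at 0)"
    using DERIV_cong_ev[OF refl ev refl] by simp
  show ?thesis using DERIV_unique[OF a b] .
qed

lemma euler2: "v \<noteq> 0 \<Longrightarrow> (\<Sum>j\<in>UNIV. v$j * pdy i (pdy j F) v) = 0"
proof -
  assume v: "v \<noteq> 0"
  have eq: "(\<Sum>j\<in>UNIV. u$j * pdy j F u) = F u" if "u \<in> UNIV - {0}" for u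
    using euler1 that by simp
  have dg: "\<And>j. (\<lambda>u. u$j * pdy j F u) differentiable at v"
    using d1[OF sm v] diff_nth by (auto intro!: differentiable_mult)
  have "pdy i F v = pdy i (\<lambda>u. \<Sum>j\<in>UNIV. u$j * pdy j F u) v"
    using pdy_transform[OF openV _ eq diff_sum[OF _ dg]] v by simp
  also have "\<dots> = (\<Sum>j\<in>UNIV. pdy i (\<lambda>u. u$j * pdy j F u) v)"
    using pdy_sum[of UNIV "\<lambda>j u. u$j * pdy j F u" v i] dg by simp
  also have "\<dots> = (\<Sum>j\<in>UNIV. (if i = j then 1 else 0) * pdy j F v + v$j * pdy i (pdy j F) v)"
    by (rule sum.cong[OF refl]) (simp add: pdy_mult[OF diff_nth d1[OF sm v]] pdy_nth)
  also have "\<dots> = pdy i F v + (\<Sum>j\<in>UNIV. v$j * pdy i (pdy j F) v)"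
    by (simp add: sum.distrib sum_delta_mult)
  finally show ?thesis by simp
qed

lemma euler3: "v \<noteq> 0 \<Longrightarrow> (\<Sum>j\<in>UNIV. v$j * pdy k (pdy i (pdy j F)) v) = - pdy i (pdy k F) v"
proof -
  assume v: "v \<noteq> 0"
  have eq: "(\<Sum>j\<in>UNIV. u$j * pdy i (pdy j F) u) = 0" if "u \<in> UNIV - {0}" for u
    using euler2 that by simp
  have dg: "\<And>j. (\<lambda>u. u$j * pdy i (pdy j F) u) differentiable at v"
    using d2[OF sm v] diff_nth by (auto intro!: differentiable_mult)
  have "0 = pdy k (\<lambda>u. \<Sum>j\<in>UNIV. u$j * pdy i (pdy j F) u) v"
    using pdy_transform[OF openV _ eq diff_sum[OF _ dg]] v pdy_const[of k 0 v] by simp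
  also have "\<dots> = (\<Sum>j\<in>UNIV. pdy k (\<lambda>u. u$j * pdy i (pdy j F) u) v)"
    using pdy_sum[of UNIV "\<lambda>j u. u$j * pdy i (pdy j F) u" v k] dg by simp
  also have "\<dots> = (\<Sum>j\<in>UNIV. (if k = j then 1 else 0) * pdy i (pdy j F) v + v$j * pdy k (pdy i (pdy j F)) v)"
    by (rule sum.cong[OF refl]) (simp add: pdy_mult[OF diff_nth d2[OF sm v]] pdy_nth)
  also have "\<dots> = pdy i (pdy k F) v + (\<Sum>j\<in>UNIV. v$j * pdy k (pdy i (pdy j F)) v)"
    by (simp add: sum.distrib sum_delta_mult)
  finally show ?thesis by simp
qed

lemma sym2: "v \<noteq> 0 \<Longrightarrow> pdy i (pdy j F) v = pdy j (pdy i F) v"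
  by (rule schwarz[OF openV, of v F i j])
     (use sm in \<open>auto simp: smooth3_def intro: differentiable_imp_continuous_within[where s=UNIV, simplified]\<close>)

lemma sym2': "v \<noteq> 0 \<Longrightarrow> pdy k (pdy i (pdy j F)) v = pdy i (pdy k (pdy j F)) v"
  by (rule schwarz[OF openV, of v "pdy j F" k i])
     (use sm in \<open>auto simp: smooth3_def intro: differentiable_imp_continuous_within[where s=UNIV, simplified]\<close>)

lemma sym3: "v \<noteq> 0 \<Longrightarrow> pdy k (pdy i (pdy j F)) v = pdy k (pdy j (pdy i F)) v"
proof -
  assume v: "v \<noteq> 0"
  have eq: "pdy j (pdy i F) u = pdy i (pdy j F) u" if "u \<in> UNIV - {0}" for u
    using sym2 that by simp
  show ?thesis using pdy_transform[OF openV _ eq d2[OF sm v]] v by simp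
qed

end

definition outer :: "real^'n \<Rightarrow> real^'m \<Rightarrow> real^'m^'n" where
  "outer u v = (\<chi> i j. u$i * v$j)"

definition frob :: "real^'n^'m \<Rightarrow> real^'n^'m \<Rightarrow> real" where
  "frob A B = (\<Sum>j\<in>UNIV. \<Sum>k\<in>UNIV. A$j$k * B$j$k)"

lemma inner_sum: "u \<bullet> v = (\<Sum>i\<in>UNIV. u$i * (v::real^'n)$i)"
  by (simp add: inner_vec_def)

lemma mv_nth: "(A *v v) $ i = (\<Sum>j\<in>UNIV. A$i$j * v$j)"
  by (simp add: matrix_vector_mult_def)

lemma outer_mv: "outer u v *v x = (v \<bullet> x) *\<^sub>R u"
  by (simp add: vec_eq_iff mv_nth outer_def inner_sum sum_distrib_left algebra_simps)

lemma scaleR_mv: "(c *\<^sub>R A) *v x = c *\<^sub>R (A *v (x::real^'n))"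
  by (simp add: vec_eq_iff mv_nth sum_distrib_left algebra_simps)

lemma sumsum_inner: "(\<Sum>i\<in>UNIV. \<Sum>j\<in>UNIV. u$i * A$i$j * v$j) = u \<bullet> (A *v (v::real^'n))"
  by (simp add: inner_sum mv_nth sum_distrib_left algebra_simps)

lemma inner_mv_transpose: "u \<bullet> (A *v v) = (transpose A *v u) \<bullet> (v::real^'n)"
proof -
  have "u \<bullet> (A *v v) = (\<Sum>i\<in>UNIV. \<Sum>j\<in>UNIV. u$i * A$i$j * v$j)"
    by (simp add: inner_sum mv_nth sum_distrib_left mult.assoc)
  also have "\<dots> = (\<Sum>j\<in>UNIV. \<Sum>i\<in>UNIV. u$i * A$i$j * v$j)" by (rule sum.swap)
  also have "\<dots> = (transpose A *v u) \<bullet> v"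
    by (simp add: inner_sum mv_nth transpose_def sum_distrib_left mult_ac)
  finally show ?thesis .
qed

lemma inner_mv_sym: "transpose A = A \<Longrightarrow> u \<bullet> (A *v v) = (A *v u) \<bullet> (v::real^'n)"
  using inner_mv_transpose[of u A v] by simp

lemma frob_outer: "frob A (outer u v) = u \<bullet> (A *v v)"
  by (simp add: frob_def outer_def inner_sum mv_nth sum_distrib_left algebra_simps)

lemma frob_outer_left: "frob (outer u v) X = u \<bullet> (X *v v)"
  by (simp add: frob_def outer_def inner_sum mv_nth sum_distrib_left algebra_simps)

lemma frob_add_left: "frob (A + B) X = frob A X + frob B X"
  by (simp add: frob_def sum.distrib algebra_simps)
lemma frob_diff_left: "frob (A - B) X = frob A X - frob B X"
  by (simp add: frob_def sum_subtractf algebra_simps)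
lemma frob_scale_left: "frob (c *\<^sub>R A) X = c * frob A X"
  by (simp add: frob_def sum_distrib_left algebra_simps)
lemma frob_add_right: "frob A (X + Y) = frob A X + frob A Y"
  by (simp add: frob_def sum.distrib algebra_simps)
lemma frob_scale_right: "frob A (c *\<^sub>R X) = c * frob A X"
  by (simp add: frob_def sum_distrib_left algebra_simps)

lemma transpose_outer: "transpose (outer u v) = outer v u"
  by (simp add: vec_eq_iff transpose_def outer_def)

lemma frob_inverse_sym:
  fixes G g :: "real^'n^'n"
  assumes "G ** g = mat 1" "transpose g = g"
  shows "frob G g = real CARD('n)"
proof -
  have gs: "g$j$k = g$k$j" for j k
  proof -
    have "g$j$k = transpose g $j$k" using assms(2) by simp
    also have "\<dots> = g$k$j" by (simp add: transpose_def)
    finally show ?thesis .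
  qed
  have "frob G g = (\<Sum>j\<in>UNIV. (G ** g) $ j $ j)"
    unfolding frob_def matrix_matrix_mult_def by (simp add: gs)
  also have "\<dots> = real CARD('n)" using assms(1) by (simp add: mat_def)
  finally show ?thesis .
qed

lemma inverse_sym:
  fixes G g :: "real^'n^'n"
  assumes "G ** g = mat 1" "g ** G = mat 1" "transpose g = g"
  shows "transpose G = G"
proof -
  have "transpose G ** g = transpose (transpose g ** G)"
    by (simp add: matrix_transpose_mul)
  also have "\<dots> = mat 1" using assms by simp
  finally have a: "transpose G ** g = mat 1" .
  have "transpose G = transpose G ** (g ** G)" using assms by simp
  also have "\<dots> = G" by (simp add: matrix_mul_assoc a)
  finally show ?thesis .
qed

lemma transpose_add: "transpose (A + B) = transpose A + transpose (B::real^'n^'m)"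
  by (simp add: vec_eq_iff transpose_def)
lemma transpose_scale: "transpose (c *\<^sub>R A) = c *\<^sub>R transpose (A::real^'n^'m)"
  by (simp add: vec_eq_iff transpose_def)

lemma alg:
  fixes F e :: real and l b y :: "real^'n" and F2 G GS :: "real^'n^'n" and c cS :: "'n \<Rightarrow> real^'n^'n"
  defines "\<beta> \<equiv> b \<bullet> y"
  defines "Fs \<equiv> e * F + \<beta>"
  defines "\<tau> \<equiv> e * Fs / F"
  defines "m \<equiv> b - (\<beta> / F) *\<^sub>R l"
  defines "ls \<equiv> e *\<^sub>R l + b"
  defines "g \<equiv> outer l l + F *\<^sub>R F2"
  defines "gS \<equiv> outer ls ls + (Fs * e) *\<^sub>R F2"
  defines "w \<equiv> G *v m"
  defines "m2 \<equiv> m \<bullet> w"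
  defines "p \<equiv> 1/Fs^2 - 1/(e*Fs*F) + m2*F/(e*Fs^3)"
  defines "q \<equiv> F/(e*Fs^2)"
  defines "M \<equiv> (1/\<tau>) *\<^sub>R G + p *\<^sub>R outer y y - q *\<^sub>R (outer y w + outer w y)"
  assumes Fp: "F > 0" and ep: "e > 0" and Fsp: "Fs > 0"
    and F2s: "transpose F2 = F2" and F2y: "F2 *v y = 0" and ly: "l \<bullet> y = F"
    and Gi1: "G ** g = mat 1" and Gi2: "g ** G = mat 1"
    and GSi: "GS ** gS = mat 1"
    and cs: "\<And>i j k. c i $ j $ k = c j $ i $ k"
    and cy1: "\<And>i. c i *v y = 0" and cy2: "\<And>i. transpose (c i) *v y = 0"
    and cS: "\<And>i j k. cS i $ j $ k = \<tau> * c i $ j $ k + (e/2) * (F2$k$i * m$j + F2$k$j * m$i + F2$i$j * m$k)"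
  shows "(\<chi> i. frob GS (cS i)) \<bullet> (GS *v (\<chi> i. frob GS (cS i))) = inverse \<tau> * ((\<chi> i. frob G (c i)) \<bullet> (G *v (\<chi> i. frob G (c i)))
     + (real CARD('n) + 1) / Fs * ((\<chi> i. frob G (c i)) \<bullet> (G *v b) + (real CARD('n) + 1) / (4 * Fs) * (m \<bullet> (G *v m))))"
proof -
  have gs: "transpose g = g" unfolding g_def
    by (simp add: transpose_add transpose_scale transpose_outer F2s)
  have Gs: "transpose G = G" using inverse_sym[OF Gi1 Gi2 gs] .
  have gy: "g *v y = F *\<^sub>R l"
    unfolding g_def by (simp add: matrix_vector_mult_add_rdistrib scaleR_mv outer_mv F2y inner_commute ly)
  have "y = G *v (g *v y)" by (simp add: matrix_vector_mul_assoc Gi1)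
  also have "\<dots> = F *\<^sub>R (G *v l)" by (simp add: gy matrix_vector_mult_scaleR)
  finally have Gl: "G *v l = (1/F) *\<^sub>R y" using Fp by simp
  have my: "m \<bullet> y = 0" unfolding m_def \<beta>_def using Fp
    by (simp add: inner_diff_left inner_commute[of y l] ly)
  have lw: "l \<bullet> w = 0" unfolding w_def
    using inner_mv_sym[OF Gs, of l m] Gl my by (simp add: inner_commute)
  have "m = g *v w" unfolding w_def by (simp add: matrix_vector_mul_assoc Gi2)
  also have "\<dots> = F *\<^sub>R (F2 *v w)"
    unfolding g_def by (simp add: matrix_vector_mult_add_rdistrib scaleR_mv outer_mv lw)
  finally have F2w: "F2 *v w = (1/F) *\<^sub>R m" using Fp by simp
  have F2G: "F2 *v (G *v x) = (1/F) *\<^sub>R (x - ((y \<bullet> x)/F) *\<^sub>R l)" for x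
  proof -
    have "x = g *v (G *v x)" by (simp add: matrix_vector_mul_assoc Gi2)
    also have "\<dots> = (l \<bullet> (G *v x)) *\<^sub>R l + F *\<^sub>R (F2 *v (G *v x))"
      unfolding g_def by (simp add: matrix_vector_mult_add_rdistrib scaleR_mv outer_mv)
    also have "l \<bullet> (G *v x) = (y \<bullet> x)/F"
      using inner_mv_sym[OF Gs, of l x] Gl by simp
    finally have e: "x = (y \<bullet> x / F) *\<^sub>R l + F *\<^sub>R (F2 *v (G *v x))" .
    have "F *\<^sub>R (F2 *v (G *v x)) = x - (y \<bullet> x / F) *\<^sub>R l"
      by (subst (2) e) simp
    then have "(1/F) *\<^sub>R (F *\<^sub>R (F2 *v (G *v x))) = (1/F) *\<^sub>R (x - (y \<bullet> x / F) *\<^sub>R l)" by simp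
    then show ?thesis using Fp by simp
  qed
  have coef: "e/F + \<beta>/F^2 = Fs/F^2" using Fp unfolding Fs_def by (simp add: field_simps power2_eq_square)
  have lsG: "ls \<bullet> (G *v x) = (Fs/F^2) * (y \<bullet> x) + w \<bullet> x" for x
  proof -
    have bm: "b = m + (\<beta>/F) *\<^sub>R l" unfolding m_def by simp
    have "ls \<bullet> (G *v x) = (G *v ls) \<bullet> x" using inner_mv_sym[OF Gs] by simp
    also have "G *v ls = (e/F + \<beta>/F^2) *\<^sub>R y + w"
      unfolding ls_def w_def using Fp
      by (subst bm) (simp add: matrix_vector_right_distrib matrix_vector_mult_scaleR Gl power2_eq_square algebra_simps)
    finally show ?thesis by (simp add: inner_add_left coef)
  qed
  have lsy: "ls \<bullet> y = Fs" unfolding ls_def Fs_def \<beta>_def by (simp add: inner_add_left ly)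
  have lsw: "ls \<bullet> w = m2"
  proof -
    have "ls \<bullet> w = ls \<bullet> (G *v m)" unfolding w_def ..
    also have "\<dots> = w \<bullet> m" using lsG[of m] my by (simp add: inner_commute)
    finally show ?thesis unfolding m2_def by (simp add: inner_commute)
  qed
  have tp: "\<tau> > 0" unfolding \<tau>_def using Fp ep Fsp by simp
  have Mx: "M *v x = (1/\<tau>) *\<^sub>R (G *v x) + (p * (y \<bullet> x) - q * (w \<bullet> x)) *\<^sub>R y - (q * (y \<bullet> x)) *\<^sub>R w" for x
    unfolding M_def by (simp add: matrix_vector_mult_add_rdistrib matrix_vector_mult_diff_rdistrib scaleR_mv outer_mv algebra_simps)
  have gSM: "gS *v (M *v x) = x" for x
  proof -
    have A: "ls \<bullet> (M *v x) = (1/\<tau>) * ((Fs/F^2) * (y \<bullet> x) + w \<bullet> x) + (p * (y \<bullet> x) - q * (w \<bullet> x)) * Fs - q * (y \<bullet> x) * m2"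
      unfolding Mx by (simp add: inner_add_right inner_diff_right lsG lsy lsw)
    have B: "F2 *v (M *v x) = (1/\<tau>) *\<^sub>R ((1/F) *\<^sub>R (x - ((y \<bullet> x)/F) *\<^sub>R l)) - (q * (y \<bullet> x)) *\<^sub>R ((1/F) *\<^sub>R m)"
      unfolding Mx by (simp add: matrix_vector_right_distrib matrix_vector_mult_diff_distrib matrix_vector_mult_scaleR F2G F2y F2w)
    have "gS *v (M *v x) = (ls \<bullet> (M *v x)) *\<^sub>R ls + (Fs * e) *\<^sub>R (F2 *v (M *v x))"
      unfolding gS_def by (simp add: matrix_vector_mult_add_rdistrib scaleR_mv outer_mv)
    also have "\<dots> = x"
    proof -
      have lsm: "ls = (Fs/F) *\<^sub>R l + m" unfolding ls_def m_def Fs_def using Fp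
        by (simp add: algebra_simps add_divide_distrib)
      show ?thesis unfolding A B
        apply (subst lsm)
        unfolding vec_eq_iff p_def q_def \<tau>_def
        using Fp ep Fsp
        by (simp add: field_simps power2_eq_square power3_eq_cube)
    qed
    finally show ?thesis .
  qed
  have "gS ** M = mat 1"
    by (rule matrix_eq[THEN iffD2]) (simp add: matrix_vector_mul_assoc[symmetric] gSM)
  then have "GS = (GS ** gS) ** M" by (simp add: matrix_mul_assoc[symmetric])
  then have GSM: "GS = M" by (simp add: GSi)
  let ?n = "real CARD('n)"
  define cv where "cv = (\<chi> i. frob G (c i))"
  define k0 where "k0 = (?n + 1) / (2 * Fs)"
  have F2ij: "F2$a$d = F2$d$a" for a d
  proof -
    have "F2$a$d = transpose F2 $a$d" using F2s by simp
    also have "\<dots> = F2$d$a" by (simp add: transpose_def)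
    finally show ?thesis .
  qed
  have ry: "(F2$i) \<bullet> y = 0" for i
    using F2y by (simp add: vec_eq_iff mv_nth inner_sum)
  have rw: "(F2$i) \<bullet> w = m$i / F" for i
  proof -
    have "(F2$i) \<bullet> w = (F2 *v w)$i" by (simp add: mv_nth inner_sum)
    then show ?thesis using F2w by simp
  qed
  have Mx': "M *v x = (1/\<tau>) *\<^sub>R (G *v x) + (p * (y \<bullet> x) - q * (w \<bullet> x)) *\<^sub>R y - (q * (y \<bullet> x)) *\<^sub>R w" for x
    by (rule Mx)
  have frobM: "frob M A = (1/\<tau>) * frob G A + p * (y \<bullet> (A *v y)) - q * (y \<bullet> (A *v w) + w \<bullet> (A *v y))" for A
    unfolding M_def by (simp add: frob_add_left frob_diff_left frob_scale_left frob_outer_left)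
  have gs2: "transpose g = g" unfolding g_def
    by (simp add: transpose_add transpose_scale transpose_outer F2s)
  have fGg: "frob G g = ?n" by (rule frob_inverse_sym[OF Gi1 gs2])
  have fGll: "frob G (outer l l) = 1"
    using Fp by (simp add: frob_outer Gl inner_commute ly)
  have "frob G g = frob G (outer l l) + F * frob G F2"
    unfolding g_def by (simp add: frob_add_right frob_scale_right)
  then have fGF2: "frob G F2 = (?n - 1) / F" using fGg fGll Fp by (simp add: field_simps)
  have F2yv: "F2 *v y = 0" by (rule F2y)
  have yF2w: "y \<bullet> (F2 *v w) = 0" using my F2w by (simp add: inner_commute)
  have fMF2: "frob M F2 = (1/\<tau>) * ((?n - 1) / F)"
    using frobM[of F2] fGF2 yF2w F2y by simp
  have Mm: "M *v m = (1/\<tau>) *\<^sub>R w - (q * m2) *\<^sub>R y"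
    using Mx'[of m] my by (simp add: inner_commute w_def m2_def)
  have fMmr: "frob M (outer m (F2$i)) = m$i / (\<tau> * F)" for i
  proof -
    have "frob M (outer m (F2$i)) = m \<bullet> (M *v (F2$i))" by (rule frob_outer)
    also have "\<dots> = (1/\<tau>) * (m \<bullet> (G *v (F2$i)))"
      using Mx'[of "F2$i"] ry[of i] my by (simp add: inner_add_right inner_diff_right inner_commute)
    also have "m \<bullet> (G *v (F2$i)) = w \<bullet> (F2$i)" unfolding w_def by (rule inner_mv_sym[OF Gs])
    finally show ?thesis using rw[of i] by (simp add: inner_commute)
  qed
  have fMrm: "frob M (outer (F2$i) m) = m$i / (\<tau> * F)" for i
  proof -
    have "frob M (outer (F2$i) m) = (F2$i) \<bullet> (M *v m)" by (rule frob_outer)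
    also have "\<dots> = m$i / (\<tau> * F)"
      unfolding Mm using ry[of i] rw[of i] by (simp add: inner_diff_right)
    finally show ?thesis .
  qed
  have fMc: "frob M (c i) = (1/\<tau>) * frob G (c i)" for i
  proof -
    have "y \<bullet> (c i *v w) = (transpose (c i) *v y) \<bullet> w" by (rule inner_mv_transpose)
    then show ?thesis using frobM[of "c i"] cy1[of i] cy2[of i] by simp
  qed
  have cSdec: "cS i = \<tau> *\<^sub>R c i + (e/2) *\<^sub>R (outer m (F2$i) + m$i *\<^sub>R F2 + outer (F2$i) m)" for i
    unfolding vec_eq_iff by (simp add: cS outer_def algebra_simps) (metis F2ij mult.commute)
  have tp2: "\<tau> * F = e * Fs" unfolding \<tau>_def using Fp by simp
  have cvS: "(\<chi> i. frob GS (cS i)) = cv + k0 *\<^sub>R m"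
  proof -
    have "frob GS (cS i) = cv$i + k0 * m$i" for i
    proof -
      have "frob GS (cS i) = \<tau> * frob M (c i) + (e/2) * (frob M (outer m (F2$i)) + m$i * frob M F2 + frob M (outer (F2$i) m))"
        unfolding GSM cSdec by (simp add: frob_add_right frob_scale_right)
      also have "\<dots> = frob G (c i) + (e/2) * ((?n + 1) * m$i / (\<tau> * F))"
        unfolding fMc fMmr fMrm fMF2 using tp Fp by (simp add: field_simps)
      also have "\<dots> = cv$i + k0 * m$i"
        unfolding cv_def k0_def tp2 using ep Fsp by (simp add: field_simps)
      finally show ?thesis .
    qed
    then show ?thesis by (simp add: vec_eq_iff)
  qed
  have ycv: "y \<bullet> cv = 0"
  proof -
    have z: "(\<Sum>i\<in>UNIV. y$i * c i $j$k) = 0" for j k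
    proof -
      have "(\<Sum>i\<in>UNIV. y$i * c i $j$k) = (transpose (c j) *v y) $ k"
        by (simp add: mv_nth transpose_def cs[of _ j] mult.commute)
      then show ?thesis using cy2[of j] by simp
    qed
    have "y \<bullet> cv = (\<Sum>i\<in>UNIV. \<Sum>j\<in>UNIV. \<Sum>k\<in>UNIV. y$i * (G$j$k * c i$j$k))"
      unfolding cv_def by (simp add: inner_sum frob_def sum_distrib_left)
    also have "\<dots> = (\<Sum>j\<in>UNIV. \<Sum>i\<in>UNIV. \<Sum>k\<in>UNIV. y$i * (G$j$k * c i$j$k))" by (rule sum.swap)
    also have "\<dots> = (\<Sum>j\<in>UNIV. \<Sum>k\<in>UNIV. \<Sum>i\<in>UNIV. y$i * (G$j$k * c i$j$k))"
      by (rule sum.cong[OF refl], rule sum.swap)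
    also have "\<dots> = (\<Sum>j\<in>UNIV. \<Sum>k\<in>UNIV. G$j$k * (\<Sum>i\<in>UNIV. y$i * c i$j$k))"
      by (simp add: sum_distrib_left mult_ac)
    also have "\<dots> = 0" by (simp add: z)
    finally show ?thesis .
  qed
  have ycvS: "y \<bullet> (cv + k0 *\<^sub>R m) = 0" using ycv my by (simp add: inner_add_right inner_commute)
  have Gb: "G *v b = w + (\<beta> / F^2) *\<^sub>R y"
  proof -
    have bm: "b = m + (\<beta>/F) *\<^sub>R l" unfolding m_def by simp
    show ?thesis unfolding w_def using Fp
      by (subst bm) (simp add: matrix_vector_right_distrib matrix_vector_mult_scaleR Gl power2_eq_square)
  qed
  have cvGb: "cv \<bullet> (G *v b) = cv \<bullet> w" unfolding Gb using ycv by (simp add: inner_add_right inner_commute)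
  have mGcv: "m \<bullet> (G *v cv) = cv \<bullet> w" unfolding w_def using inner_mv_sym[OF Gs, of m cv] by (simp add: inner_commute)
  have "(cv + k0 *\<^sub>R m) \<bullet> (M *v (cv + k0 *\<^sub>R m)) = (1/\<tau>) * ((cv + k0 *\<^sub>R m) \<bullet> (G *v (cv + k0 *\<^sub>R m)))"
    using Mx'[of "cv + k0 *\<^sub>R m"] ycvS by (simp add: inner_add_right inner_diff_right inner_commute)
  also have "(cv + k0 *\<^sub>R m) \<bullet> (G *v (cv + k0 *\<^sub>R m)) = cv \<bullet> (G *v cv) + 2 * k0 * (cv \<bullet> w) + k0^2 * m2"
    by (simp add: matrix_vector_right_distrib matrix_vector_mult_scaleR inner_add_left inner_add_right
        mGcv m2_def w_def power2_eq_square algebra_simps)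
  finally have fin: "(cv + k0 *\<^sub>R m) \<bullet> (M *v (cv + k0 *\<^sub>R m)) = (1/\<tau>) * (cv \<bullet> (G *v cv) + 2 * k0 * (cv \<bullet> w) + k0^2 * m2)" .
  show ?thesis unfolding cvS unfolding GSM fin cv_def[symmetric]
    unfolding cvGb m2_def[unfolded w_def, symmetric] k0_def using Fsp tp
    by (simp add: field_simps power2_eq_square w_def)
qed

lemma matrix_inv_props:
  fixes A :: "real^'n^'n"
  assumes "invertible A"
  shows "A ** matrix_inv A = mat 1" "matrix_inv A ** A = mat 1"
proof -
  have "\<exists>A'. A ** A' = mat 1 \<and> A' ** A = mat 1" using assms unfolding invertible_def by blast
  then have "A ** matrix_inv A = mat 1 \<and> matrix_inv A ** A = mat 1"
    unfolding matrix_inv_def by (rule someI_ex)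
  then show "A ** matrix_inv A = mat 1" "matrix_inv A ** A = mat 1" by auto
qed

lemma pd_invertible:
  fixes A :: "real^'n^'n"
  assumes pd: "\<And>w. w \<noteq> 0 \<Longrightarrow> (\<Sum>i\<in>UNIV. \<Sum>j\<in>UNIV. A$i$j * w$i * w$j) > 0"
  shows "invertible A"
proof -
  have z: "w = 0" if "A *v w = 0" for w
  proof (rule ccontr)
    assume "w \<noteq> 0"
    then have "(\<Sum>i\<in>UNIV. \<Sum>j\<in>UNIV. A$i$j * w$i * w$j) > 0" by (rule pd)
    moreover have "(\<Sum>i\<in>UNIV. \<Sum>j\<in>UNIV. A$i$j * w$i * w$j) = w \<bullet> (A *v w)"
      using sumsum_inner[of w A w] by (simp add: mult_ac)
    ultimately show False using that by simp
  qed
  have "inj ((*v) A)"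
  proof (rule injI)
    fix u v assume "A *v u = A *v v"
    then have "A *v (u - v) = 0" by (simp add: matrix_vector_mult_diff_distrib)
    then have "u - v = 0" using z by blast
    then show "u = v" by simp
  qed
  then show ?thesis using matrix_left_invertible_injective invertible_left_inverse by blast
qed

theorem lemma3:
  fixes U :: "(real^'n::finite) set"
    and L :: "real^'n \<Rightarrow> real^'n \<Rightarrow> real"
    and \<sigma> :: "real^'n \<Rightarrow> real"
    and b :: "real^'n \<Rightarrow> real^'n"
    and x y :: "real^'n"
  assumes "open U"
    and "finsler U L"
    and "smooth_on U \<sigma>"
    and "\<forall>i. smooth_on U (\<lambda>z. b z $ i)"
    and "finsler U (conf_beta \<sigma> b L)"
    and "x \<in> U" and "y \<noteq> 0"
  shows "let \<tau> = exp (\<sigma> x) * conf_beta \<sigma> b L x y / L x y in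
         csq (conf_beta \<sigma> b L) x y
           = inverse \<tau> * (csq L x y
               + (real CARD('n) + 1) / conf_beta \<sigma> b L x y * Abeta \<sigma> b L x y)"
proof -
  note U = assms(1) and fL = assms(2) and fS = assms(5) and xU = assms(6) and y = assms(7)
  define F where "F = L x"
  define e where "e = exp (\<sigma> x)"
  define bx where "bx = b x"
  define FS where "FS = conf_beta \<sigma> b L x"
  have FSe: "FS = (\<lambda>v. e * F v + (\<Sum>i\<in>UNIV. bx$i * v$i))"
    unfolding FS_def F_def e_def bx_def by (simp add: fun_eq_iff conf_beta_def betaf_def)
  have sm: "smooth3 F" unfolding smooth3_def F_def using finsler_diff[OF U fL xU] by blast
  have smS: "smooth3 FS" unfolding smooth3_def FS_def using finsler_diff[OF U fS xU] by blast
  have hom: "\<And>v t. t > 0 \<Longrightarrow> F (t *\<^sub>R v) = t * F v" using fL xU unfolding finsler_def F_def by blast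
  have Fp: "F y > 0" using fL xU y unfolding finsler_def F_def by blast
  have FSp: "FS y > 0" using fS xU y unfolding finsler_def FS_def by blast
  have ep: "e > 0" by (simp add: e_def)
  define l where "l = (\<chi> i. pdy i F y)"
  define F2 where "F2 = (\<chi> i j. pdy i (pdy j F) y)"
  define F3 where "F3 k i j = pdy k (pdy i (pdy j F)) y" for k i j
  define \<beta> where "\<beta> = bx \<bullet> y"
  have FSy: "FS y = e * F y + \<beta>" unfolding FSe \<beta>_def by (simp add: inner_sum)
  have dF: "F differentiable at v" "pdy j F differentiable at v" "pdy i (pdy j F) differentiable at v"
    if "v \<noteq> 0" for v i j using sm that unfolding smooth3_def by auto
  have R1: "pdy j FS v = e * pdy j F v + bx$j" if "v \<noteq> 0" for j v
  proof -
    have "pdy j FS v = pdy j (\<lambda>w. e * F w + (\<Sum>i\<in>UNIV. bx$i * w$i)) v" by (simp add: FSe)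
    also have "\<dots> = pdy j (\<lambda>w. e * F w) v + pdy j (\<lambda>w. \<Sum>i\<in>UNIV. bx$i * w$i) v"
      by (rule pdy_add) (use dF[OF that] diff_linear in auto)
    also have "\<dots> = e * pdy j F v + bx$j" using pdy_cmult[OF dF(1)[OF that]] pdy_linear by simp
    finally show ?thesis .
  qed
  have R2: "pdy i (pdy j FS) v = e * pdy i (pdy j F) v" if "v \<noteq> 0" for i j v
  proof -
    have eq: "(\<lambda>w. e * pdy j F w + bx$j) u = pdy j FS u" if "u \<in> UNIV - {0}" for u
      using R1 that by simp
    have dg: "(\<lambda>w. e * pdy j F w + bx$j) differentiable at v" using dF[OF that] by auto
    have "pdy i (pdy j FS) v = pdy i (\<lambda>w. e * pdy j F w + bx$j) v"
      using pdy_transform[OF openV _ eq dg] that by simp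
    also have "\<dots> = pdy i (\<lambda>w. e * pdy j F w) v + pdy i (\<lambda>w. bx$j) v"
      by (rule pdy_add) (use dF[OF that] in auto)
    also have "\<dots> = e * pdy i (pdy j F) v" using pdy_cmult[OF dF(2)[OF that]] pdy_const by simp
    finally show ?thesis .
  qed
  have R3: "pdy k (pdy i (pdy j FS)) y = e * F3 k i j" for k i j
  proof -
    have eq: "(\<lambda>w. e * pdy i (pdy j F) w) u = pdy i (pdy j FS) u" if "u \<in> UNIV - {0}" for u
      using R2 that by simp
    have dg: "(\<lambda>w. e * pdy i (pdy j F) w) differentiable at y" using dF[OF y] by auto
    have "pdy k (pdy i (pdy j FS)) y = pdy k (\<lambda>w. e * pdy i (pdy j F) w) y"
      using pdy_transform[OF openV _ eq dg] y by simp
    also have "\<dots> = e * F3 k i j" unfolding F3_def using pdy_cmult[OF dF(3)[OF y]] by simp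
    finally show ?thesis .
  qed
  define ls where "ls = e *\<^sub>R l + bx"
  have lsv: "pdy i FS y = ls$i" for i unfolding ls_def l_def using R1[OF y] by simp
  have F2ij: "F2$a$d = F2$d$a" for a d unfolding F2_def using sym2[OF sm hom y] by simp
  have F2s: "transpose F2 = F2" by (simp add: vec_eq_iff transpose_def F2ij)
  have F2row: "(\<Sum>j\<in>UNIV. F2$i$j * y$j) = 0" for i
  proof -
    have "(\<Sum>j\<in>UNIV. F2$i$j * y$j) = (\<Sum>j\<in>UNIV. y$j * pdy i (pdy j F) y)"
      unfolding F2_def by (simp add: mult.commute)
    then show ?thesis using euler2[OF sm hom y] by simp
  qed
  have F2col: "(\<Sum>k\<in>UNIV. F2$k$i * y$k) = 0" for i using F2row[of i] by (simp add: F2ij)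
  have F2y: "F2 *v y = 0" by (simp add: vec_eq_iff mv_nth F2row)
  have ly: "l \<bullet> y = F y"
  proof -
    have "l \<bullet> y = (\<Sum>i\<in>UNIV. y$i * pdy i F y)" unfolding l_def by (simp add: inner_sum mult.commute)
    then show ?thesis using euler1[OF sm hom y] by simp
  qed
  have lyk: "(\<Sum>k\<in>UNIV. l$k * y$k) = F y" using ly by (simp add: inner_sum)
  have F3s: "F3 k i j = F3 k j i" for k i j unfolding F3_def using sym3[OF sm hom y] by simp
  have F3c: "(\<Sum>j\<in>UNIV. F3 k i j * y$j) = - F2$i$k" for k i
  proof -
    have "(\<Sum>j\<in>UNIV. F3 k i j * y$j) = (\<Sum>j\<in>UNIV. y$j * pdy k (pdy i (pdy j F)) y)"
      unfolding F3_def by (simp add: mult.commute)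
    then show ?thesis using euler3[OF sm hom y] unfolding F2_def by simp
  qed
  have F3k: "(\<Sum>k\<in>UNIV. F3 k i j * y$k) = - F2$i$j" for i j
  proof -
    have "F3 k i j = pdy i (pdy j (pdy k F)) y" for k
      unfolding F3_def using sym2'[OF sm hom y, of k i j] sym3[OF sm hom y, of i k j] by simp
    then have "(\<Sum>k\<in>UNIV. F3 k i j * y$k) = (\<Sum>k\<in>UNIV. y$k * pdy i (pdy j (pdy k F)) y)"
      by (simp add: mult.commute)
    then show ?thesis using euler3[OF sm hom y, of i j] F2ij unfolding F2_def by simp
  qed
  define G where "G = matrix_inv (gmat L x y)"
  define GS where "GS = matrix_inv (gmat (conf_beta \<sigma> b L) x y)"
  have gL: "gmat L x y = outer l l + F y *\<^sub>R F2"
    unfolding vec_eq_iff gmat_def outer_def l_def F2_def using g_formula[OF sm y]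
    by (simp add: gt_def F_def)
  have gSv: "gmat (conf_beta \<sigma> b L) x y = outer ls ls + (FS y * e) *\<^sub>R F2"
    unfolding vec_eq_iff gmat_def outer_def F2_def gt_def FS_def[symmetric]
    using g_formula[OF smS y] lsv R2[OF y] by simp
  have invL: "invertible (gmat L x y)"
    by (rule pd_invertible) (use fL xU y in \<open>auto simp: finsler_def gmat_def\<close>)
  have invS: "invertible (gmat (conf_beta \<sigma> b L) x y)"
    by (rule pd_invertible) (use fS xU y in \<open>auto simp: finsler_def gmat_def\<close>)
  have Gi1: "G ** (outer l l + F y *\<^sub>R F2) = mat 1"
    using matrix_inv_props(2)[OF invL] unfolding G_def gL .
  have Gi2: "(outer l l + F y *\<^sub>R F2) ** G = mat 1"
    using matrix_inv_props(1)[OF invL] unfolding G_def gL .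
  have GSi: "GS ** (outer (e *\<^sub>R l + bx) (e *\<^sub>R l + bx) + ((e * F y + bx \<bullet> y) * e) *\<^sub>R F2) = mat 1"
    using matrix_inv_props(2)[OF invS] unfolding GS_def gSv FSy \<beta>_def ls_def .
  define c where "c i = (\<chi> j k. ct L x y i j k)" for i
  define cS where "cS i = (\<chi> j k. ct (conf_beta \<sigma> b L) x y i j k)" for i
  have cval: "c i $ j $ k = (1/2) * (F2$k$i * l$j + l$i * F2$k$j + l$k * F2$i$j + F y * F3 k i j)" for i j k
    unfolding c_def ct_def gt_def using c_formula[OF sm y, of k i j]
    by (simp add: F_def l_def F2_def F3_def)
  have cSval: "cS i $ j $ k = (1/2) * (e * F2$k$i * ls$j + ls$i * (e * F2$k$j) + ls$k * (e * F2$i$j) + FS y * (e * F3 k i j))" for i j k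
    unfolding cS_def ct_def gt_def FS_def[symmetric] using c_formula[OF smS y, of k i j] R2[OF y] R3 lsv
    by (simp add: F2_def)
  have cs: "c i $ j $ k = c j $ i $ k" for i j k
    unfolding cval using F2ij F3s by (simp add: algebra_simps)
  have cy1: "c i *v y = 0" for i
  proof -
    have "(\<Sum>k\<in>UNIV. c i $ j $ k * y$k) = (1/2) * ((\<Sum>k\<in>UNIV. F2$k$i * y$k) * l$j + l$i * (\<Sum>k\<in>UNIV. F2$k$j * y$k)
        + (\<Sum>k\<in>UNIV. l$k * y$k) * F2$i$j + F y * (\<Sum>k\<in>UNIV. F3 k i j * y$k))" for j
      unfolding cval by (simp add: sum.distrib sum_distrib_left sum_distrib_right algebra_simps)
    then show ?thesis by (simp add: vec_eq_iff mv_nth F2col lyk F3k)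
  qed
  have cy2: "transpose (c i) *v y = 0" for i
  proof -
    have "(\<Sum>j\<in>UNIV. c i $ j $ k * y$j) = (1/2) * (F2$k$i * (\<Sum>j\<in>UNIV. l$j * y$j) + l$i * (\<Sum>j\<in>UNIV. F2$k$j * y$j)
        + l$k * (\<Sum>j\<in>UNIV. F2$i$j * y$j) + F y * (\<Sum>j\<in>UNIV. F3 k i j * y$j))" for k
      unfolding cval by (simp add: sum.distrib sum_distrib_left sum_distrib_right algebra_simps)
    then show ?thesis by (simp add: vec_eq_iff mv_nth transpose_def F2row F2col lyk F3c F2ij)
  qed
  have cSf: "cS i $ j $ k = e * (e * F y + bx \<bullet> y) / F y * c i $ j $ k +
    e / 2 * (F2 $ k $ i * (bx - (bx \<bullet> y / F y) *\<^sub>R l) $ j +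
     F2 $ k $ j * (bx - (bx \<bullet> y / F y) *\<^sub>R l) $ i +
     F2 $ i $ j * (bx - (bx \<bullet> y / F y) *\<^sub>R l) $ k)" for i j k
    unfolding cSval cval FSy \<beta>_def ls_def using Fp by (simp add: field_simps)
  have Fsp: "0 < e * F y + bx \<bullet> y" using FSp FSy \<beta>_def by simp
  note ALG = alg[of "F y" e bx y F2 l G GS c cS, OF Fp ep Fsp F2s F2y ly Gi1 Gi2 GSi cs cy1 cy2 cSf]
  have cvS: "cvec (conf_beta \<sigma> b L) x y i = frob GS (cS i)" for i
    by (simp add: cvec_def frob_def ginv_def GS_def cS_def)
  have cvL: "cvec L x y i = frob G (c i)" for i
    by (simp add: cvec_def frob_def ginv_def G_def c_def)
  have csqS: "csq (conf_beta \<sigma> b L) x y = (\<chi> i. frob GS (cS i)) \<bullet> (GS *v (\<chi> i. frob GS (cS i)))"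
    unfolding sumsum_inner[symmetric] by (simp add: csq_def cvS ginv_def GS_def)
  have csqL: "csq L x y = (\<chi> i. frob G (c i)) \<bullet> (G *v (\<chi> i. frob G (c i)))"
    unfolding sumsum_inner[symmetric] by (simp add: csq_def cvL ginv_def G_def)
  have mv: "(\<chi> i. mvec b L x y i) = bx - (bx \<bullet> y / F y) *\<^sub>R l"
    by (simp add: vec_eq_iff mvec_def betaf_def inner_sum bx_def F_def l_def)
  have msqv: "msq b L x y = (bx - (bx \<bullet> y / F y) *\<^sub>R l) \<bullet> (G *v (bx - (bx \<bullet> y / F y) *\<^sub>R l))"
    unfolding mv[symmetric] sumsum_inner[symmetric] by (simp add: msq_def ginv_def G_def mult_ac)
  have cbv: "cbeta b L x y = (\<chi> i. frob G (c i)) \<bullet> (G *v bx)"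
    unfolding sumsum_inner[symmetric] by (simp add: cbeta_def cvL ginv_def G_def bx_def)
  have FSv: "conf_beta \<sigma> b L x y = e * F y + bx \<bullet> y" using FSy by (simp add: FS_def \<beta>_def)
  have Ab: "Abeta \<sigma> b L x y = cbeta b L x y + (real CARD('n) + 1) / (4 * (e * F y + bx \<bullet> y)) * msq b L x y"
    by (simp add: Abeta_def FSv)
  have tauv: "exp (\<sigma> x) * conf_beta \<sigma> b L x y / L x y = e * (e * F y + bx \<bullet> y) / F y"
    by (simp add: e_def FSv F_def)
  show ?thesis unfolding Let_def csqS csqL Ab cbv msqv FSv using ALG by (simp add: F_def e_def)
qed

end
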